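(* Let $P$ be a $d$-dimensional convex polytope and let $O$ be an acyclic orientation of its graph $G_P$. Then $$f^O \;\geq\; \sum_{v \in V_P} \bigl|\{F \text{ a nonempty face of } P : v \text{ is a sink of } G_F \text{ with respect to } O\}\bigr| \;\geq\; \sum_{i=0}^d f_i(P),$$ where $f_i(P)$ is the number of $i$-dimensional faces of $P$.
   Context: The graph $G_P=(V_P,E_P)$ of a polytope $P$ has vertex set the vertices of $P$, with $v_i,v_j$ adjacent iff some $1$-dimensional face of $P$ contains both. For a face $F$, $G_F$ is the graph of $F$ (a subgraph of $G_P$), oriented by restricting $O$. For an orientation $O$ of a graph $G=(V,E)$, $f^O:=\sum_{v\in V}2^{\operatorname{indeg}(v)}$, where $\operatorname{indeg}$ is the in-degree with respect to $O$. A sink of a graph with respect to an orientation is a vertex all of whose incident edges are oriented towards it. *)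

theory Defs
  imports "HOL-Analysis.Analysis"
begin

definition poly_vertices :: "'a::euclidean_space set \<Rightarrow> 'a set" where
  "poly_vertices P = {v. v extreme_point_of P}"

definition poly_adj :: "'a::euclidean_space set \<Rightarrow> 'a \<Rightarrow> 'a \<Rightarrow> bool" where
  "poly_adj P u v \<longleftrightarrow> u \<in> poly_vertices P \<and> v \<in> poly_vertices P \<and> u \<noteq> v \<and>
     (\<exists>E. E edge_of P \<and> u \<in> E \<and> v \<in> E)"

text \<open>An orientation of G_P: a relation Ori (Ori u v means the edge is directed u \<rightarrow> v)
  supported on the edges, choosing exactly one direction for every edge.\<close>
definition is_orientation :: "'a::euclidean_space set \<Rightarrow> ('a \<Rightarrow> 'a \<Rightarrow> bool) \<Rightarrow> bool" where
  "is_orientation P Ori \<longleftrightarrow> (\<forall>u v. Ori u v \<longrightarrow> poly_adj P u v) \<and>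
     (\<forall>u v. poly_adj P u v \<longrightarrow> (Ori u v \<longleftrightarrow> \<not> Ori v u))"

definition acyclic_orientation :: "('a \<Rightarrow> 'a \<Rightarrow> bool) \<Rightarrow> bool" where
  "acyclic_orientation Ori \<longleftrightarrow> (\<forall>v. \<not> Ori\<^sup>+\<^sup>+ v v)"

definition indeg :: "'a::euclidean_space set \<Rightarrow> ('a \<Rightarrow> 'a \<Rightarrow> bool) \<Rightarrow> 'a \<Rightarrow> nat" where
  "indeg P Ori v = card {u. poly_adj P u v \<and> Ori u v}"

definition fO :: "'a::euclidean_space set \<Rightarrow> ('a \<Rightarrow> 'a \<Rightarrow> bool) \<Rightarrow> nat" where
  "fO P Ori = (\<Sum>v\<in>poly_vertices P. 2 ^ indeg P Ori v)"

definition is_sink :: "'a::euclidean_space set \<Rightarrow> ('a \<Rightarrow> 'a \<Rightarrow> bool) \<Rightarrow> 'a \<Rightarrow> bool" where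
  "is_sink F Ori v \<longleftrightarrow> v \<in> poly_vertices F \<and> (\<forall>u. poly_adj F u v \<longrightarrow> Ori u v)"

definition f_num :: "'a::euclidean_space set \<Rightarrow> int \<Rightarrow> nat" where
  "f_num P i = card {F. F face_of P \<and> aff_dim F = i}"

end

theory Submission
  imports Defs
begin



lemma edge_exit_aux:
  fixes F :: "'a::euclidean_space set"
  shows "\<And>F G. nat (aff_dim F) = n \<Longrightarrow> polytope F \<Longrightarrow> v extreme_point_of F \<Longrightarrow> G face_of F \<Longrightarrow> v \<in> G \<Longrightarrow> G \<noteq> F
    \<Longrightarrow> \<exists>E. E edge_of F \<and> v \<in> E \<and> \<not> E \<subseteq> G"
proof (induction n rule: less_induct)
  case (less n F G)
  have vF: "v \<in> F" using less.prems(3) by (simp add: extreme_point_of_def)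
  have ad0: "aff_dim F \<ge> 0" using vF aff_dim_negative_iff[of F] by (metis empty_iff not_le)
  have cvx: "convex F" using less.prems(2) polytope_imp_convex by blast
  have GF: "G \<subseteq> F" using less.prems(4) face_of_imp_subset by blast
  show ?case
  proof (cases "aff_dim F \<le> 1")
    case True
    have "aff_dim F \<noteq> 0"
    proof
      assume "aff_dim F = 0"
      then obtain a where "F = {a}" using aff_dim_eq_0 by blast
      then show False using GF less.prems(5,6) vF by blast
    qed
    then have "aff_dim F = 1" using True ad0 by linarith
    then have "F edge_of F" by (simp add: edge_of_def cvx face_of_refl)
    then show ?thesis using vF GF less.prems(6) by blast
  next
    case False
    have ph: "polyhedron F" using less.prems(2) polytope_imp_polyhedron by blast
    obtain K where K: "K facet_of F" "G \<subseteq> K"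
      using face_of_polyhedron_subset_facet[OF ph less.prems(4)] less.prems(5,6) by blast
    have Kf: "K face_of F" and Kd: "aff_dim K = aff_dim F - 1"
      using K(1) by (auto simp: facet_of_def)
    have Kp: "polytope K" using face_of_polytope_polytope less.prems(2) Kf by blast
    have vK: "v extreme_point_of K" using extreme_point_of_face[OF Kf] less.prems(3,5) K(2) by blast
    have nK: "nat (aff_dim K) < n" using Kd less.prems(1) False by linarith
    show ?thesis
    proof (cases "G = K")
      case False
      have "G face_of K" using face_of_subset[OF less.prems(4) K(2)] face_of_imp_subset[OF Kf] by blast
      then obtain E where "E edge_of K" "v \<in> E" "\<not> E \<subseteq> G"
        using less.IH[OF nK refl Kp vK _ less.prems(5) False] by blast
      then show ?thesis using face_of_trans[OF _ Kf] unfolding edge_of_def by blast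
    next
      case True
      have sf: "{v} face_of F" using less.prems(3) face_of_singleton by blast
      have sne: "{v} \<noteq> F" using False by auto
      have inter: "{v} = \<Inter>{K'. K' facet_of F \<and> {v} \<subseteq> K'}"
        using face_of_polyhedron[OF ph sf _ sne] by blast
      have "\<exists>K'. K' facet_of F \<and> v \<in> K' \<and> K' \<noteq> K"
      proof (rule ccontr)
        assume nn: "\<not> (\<exists>K'. K' facet_of F \<and> v \<in> K' \<and> K' \<noteq> K)"
        have vK0: "v \<in> K" using K(2) less.prems(5) by blast
        have "{K'. K' facet_of F \<and> {v} \<subseteq> K'} = {K}"
          using nn K(1) vK0 by blast
        then have "K = {v}" using inter by (metis cInf_singleton)
        then show False using Kd False by simp
      qed
      then obtain K' where K': "K' facet_of F" "v \<in> K'" "K' \<noteq> K" by blast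
      have K'f: "K' face_of F" and K'd: "aff_dim K' = aff_dim F - 1"
        using K'(1) by (auto simp: facet_of_def)
      have K'p: "polytope K'" using face_of_polytope_polytope less.prems(2) K'f by blast
      have vK': "v extreme_point_of K'" using extreme_point_of_face[OF K'f] less.prems(3) K'(2) by blast
      have nK': "nat (aff_dim K') < n" using K'd less.prems(1) False by linarith
      have If: "K \<inter> K' face_of K'"
        using face_of_subset[OF face_of_Int[OF Kf K'f]] face_of_imp_subset[OF K'f] by blast
      have Ine: "K \<inter> K' \<noteq> K'"
      proof
        assume "K \<inter> K' = K'"
        then have "K' face_of K" using face_of_subset[OF K'f] face_of_imp_subset[OF Kf] by blast
        then have "aff_dim K' < aff_dim K"
          using face_of_aff_dim_lt[OF face_of_imp_convex[OF Kf]] K'(3) by blast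
        then show False using Kd K'd by simp
      qed
      obtain E where "E edge_of K'" "v \<in> E" "\<not> E \<subseteq> K \<inter> K'"
        using less.IH[OF nK' refl K'p vK' If _ Ine] K'(2) less.prems(5) True K(2) by blast
      moreover have "E \<subseteq> K'" using \<open>E edge_of K'\<close> edge_of_imp_subset by blast
      ultimately show ?thesis using face_of_trans[OF _ K'f] True unfolding edge_of_def by blast
    qed
  qed
qed


lemma edge_exit:
  fixes F :: "'a::euclidean_space set"
  shows "polytope F \<Longrightarrow> v extreme_point_of F \<Longrightarrow> G face_of F \<Longrightarrow> v \<in> G \<Longrightarrow> G \<noteq> F
    \<Longrightarrow> \<exists>E. E edge_of F \<and> v \<in> E \<and> \<not> E \<subseteq> G"
  by (rule edge_exit_aux[OF refl])

lemma face_det_half: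
  fixes P :: "'a::euclidean_space set"
  assumes P: "polytope P" and F: "F face_of P" and F': "F' face_of P"
    and v: "v extreme_point_of P" "v \<in> F" "v \<in> F'"
    and eq: "{u. poly_adj F u v} = {u. poly_adj F' u v}"
  shows "F \<subseteq> F'"
proof (rule ccontr)
  assume nsub: "\<not> F \<subseteq> F'"
  have Fp: "polytope F" using face_of_polytope_polytope P F by blast
  have vF: "v extreme_point_of F" using extreme_point_of_face[OF F] v by blast
  have Gf: "F \<inter> F' face_of F"
    using face_of_subset[OF face_of_Int[OF F F']] face_of_imp_subset[OF F] by blast
  obtain E where E: "E edge_of F" "v \<in> E" "\<not> E \<subseteq> F \<inter> F'"
    using edge_exit[OF Fp vF Gf] v nsub by blast
  have Ef: "E face_of F" using E(1) by (simp add: edge_of_def)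
  have Ec: "compact E" "convex E"
    using face_of_imp_compact[OF polytope_imp_convex[OF Fp] polytope_imp_compact[OF Fp] Ef]
      face_of_imp_convex[OF Ef] by auto
  have "{x. x extreme_point_of E} \<subseteq> F'"
  proof
    fix w assume "w \<in> {x. x extreme_point_of E}"
    then have wE: "w extreme_point_of E" by simp
    show "w \<in> F'"
    proof (cases "w = v")
      case True then show ?thesis using v by simp
    next
      case False
      have "w extreme_point_of F" using extreme_point_of_face[OF Ef] wE by simp
      then have "poly_adj F w v" unfolding poly_adj_def poly_vertices_def
        using vF False E(1,2) extreme_point_of_face[OF Ef] wE by blast
      then have "poly_adj F' w v" using eq by blast
      then show ?thesis unfolding poly_adj_def poly_vertices_def
        using extreme_point_of_def by blast
    qed
  qed
  then have "E \<subseteq> F'"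
    using Krein_Milman_Minkowski[OF Ec] hull_minimal face_of_imp_convex[OF F'] by metis
  then show False using E(3) edge_of_imp_subset[OF E(1)] by blast
qed

lemma poly_adj_face:
  assumes F: "F face_of P" and a: "poly_adj F u v" shows "poly_adj P u v"
proof -
  obtain E where E: "E edge_of F" "u \<in> E" "v \<in> E" and uv: "u \<noteq> v"
    and u: "u extreme_point_of F" and v: "v extreme_point_of F"
    using a unfolding poly_adj_def poly_vertices_def by blast
  have "E edge_of P" using E(1) face_of_trans[OF _ F] unfolding edge_of_def by blast
  moreover have "u extreme_point_of P" "v extreme_point_of P"
    using u v extreme_point_of_face[OF F] by auto
  ultimately show ?thesis unfolding poly_adj_def poly_vertices_def using E uv by blast
qed

lemma sink_exists:
  fixes P :: "'a::euclidean_space set"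
  assumes P: "polytope P" and F: "F face_of P" "F \<noteq> {}"
    and O: "is_orientation P Ori" and A: "acyclic_orientation Ori"
  shows "\<exists>v. is_sink F Ori v"
proof -
  define S where "S = poly_vertices F"
  have Fp: "polytope F" using face_of_polytope_polytope P F by blast
  have finS: "finite S" unfolding S_def poly_vertices_def
    using finite_polyhedron_extreme_points polytope_imp_polyhedron Fp by blast
  obtain x where x: "x extreme_point_of F"
    using extreme_point_exists_convex[OF polytope_imp_compact[OF Fp] polytope_imp_convex[OF Fp] F(2)] by blast
  have xS: "x \<in> S" unfolding S_def poly_vertices_def using x by simp
  define R where "R = {(a,b). Ori a b \<and> a \<in> S \<and> b \<in> S}"
  have finR: "finite R" using finite_subset[of R "S \<times> S"] finS unfolding R_def by auto
  have tr: "(a,b) \<in> R\<^sup>+ \<Longrightarrow> Ori\<^sup>+\<^sup>+ a b" for a b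
    by (induction rule: trancl.induct) (auto simp: R_def)
  have acR: "acyclic R" unfolding acyclic_def using tr A by (auto simp: acyclic_orientation_def)
  have "wf (R\<inverse>)" using finite_acyclic_wf[of "R\<inverse>"] finR acR by (simp add: acyclic_converse)
  then obtain z where z: "z \<in> S" "\<And>y. (y,z) \<in> R\<inverse> \<Longrightarrow> y \<notin> S"
    using wfE_min[of "R\<inverse>" x S] xS by blast
  have "is_sink F Ori z"
    unfolding is_sink_def
  proof (intro conjI allI impI)
    show "z \<in> poly_vertices F" using z S_def by simp
    fix u assume a: "poly_adj F u z"
    then have uS: "u \<in> S" unfolding S_def poly_adj_def by blast
    have pa: "poly_adj P u z" using poly_adj_face[OF F(1) a] .
    have "\<not> Ori z u" using z(2)[of u] uS z(1) by (auto simp: R_def)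
    then show "Ori u z" using O pa unfolding is_orientation_def by blast
  qed
  then show ?thesis by blast
qed


theorem lemma2p10:
  fixes P :: "'a::euclidean_space set" and Ori :: "'a \<Rightarrow> 'a \<Rightarrow> bool" and d :: nat
  assumes "polytope P" and "aff_dim P = int d"
    and "is_orientation P Ori" and "acyclic_orientation Ori"
  shows "fO P Ori \<ge> (\<Sum>v\<in>poly_vertices P. card {F. F face_of P \<and> F \<noteq> {} \<and> is_sink F Ori v}) \<and>
         (\<Sum>v\<in>poly_vertices P. card {F. F face_of P \<and> F \<noteq> {} \<and> is_sink F Ori v})
           \<ge> (\<Sum>i\<le>d. f_num P (int i))"
proof -
  let ?C = "\<lambda>v. card {F. F face_of P \<and> F \<noteq> {} \<and> is_sink F Ori v}"
  have finV: "finite (poly_vertices P)" unfolding poly_vertices_def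
    using finite_polyhedron_extreme_points polytope_imp_polyhedron assms(1) by blast
  have finFaces: "finite {F. F face_of P}" using finite_polytope_faces assms(1) by blast
  have part1: "?C v \<le> 2 ^ indeg P Ori v" if vV: "v \<in> poly_vertices P" for v
  proof -
    let ?N = "{u. poly_adj P u v \<and> Ori u v}"
    have finN: "finite ?N" using finite_subset[OF _ finV, of ?N] unfolding poly_adj_def by blast
    have vext: "v extreme_point_of P" using vV by (simp add: poly_vertices_def)
    have inj: "inj_on (\<lambda>F. {u. poly_adj F u v}) {F. F face_of P \<and> F \<noteq> {} \<and> is_sink F Ori v}"
    proof (rule inj_onI)
      fix F F' assume a: "F \<in> {F. F face_of P \<and> F \<noteq> {} \<and> is_sink F Ori v}"
        "F' \<in> {F. F face_of P \<and> F \<noteq> {} \<and> is_sink F Ori v}"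
        "{u. poly_adj F u v} = {u. poly_adj F' u v}"
      have "v \<in> F" "v \<in> F'" using a(1,2) unfolding is_sink_def poly_vertices_def extreme_point_of_def by auto
      then show "F = F'" using face_det_half[OF assms(1) _ _ vext] a by (metis (no_types, lifting) mem_Collect_eq subset_antisym)
    qed
    have img: "(\<lambda>F. {u. poly_adj F u v}) ` {F. F face_of P \<and> F \<noteq> {} \<and> is_sink F Ori v} \<subseteq> Pow ?N"
      using poly_adj_face unfolding is_sink_def by blast
    have "?C v \<le> card (Pow ?N)" using card_inj_on_le[OF inj img] finN by simp
    also have "\<dots> = 2 ^ indeg P Ori v" using finN by (simp add: card_Pow indeg_def)
    finally show ?thesis .
  qed
  have ineq1: "fO P Ori \<ge> (\<Sum>v\<in>poly_vertices P. ?C v)"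
    unfolding fO_def by (rule sum_mono) (use part1 in auto)
  define Pairs where "Pairs = (SIGMA v:poly_vertices P. {F. F face_of P \<and> F \<noteq> {} \<and> is_sink F Ori v})"
  have finB: "\<forall>v\<in>poly_vertices P. finite {F. F face_of P \<and> F \<noteq> {} \<and> is_sink F Ori v}"
  proof
    fix v show "finite {F. F face_of P \<and> F \<noteq> {} \<and> is_sink F Ori v}"
      by (rule finite_subset[OF _ finFaces]) blast
  qed
  have finPairs: "finite Pairs" unfolding Pairs_def
    by (rule finite_SigmaI[OF finV]) (use finB in blast)
  have sumP: "(\<Sum>v\<in>poly_vertices P. ?C v) = card Pairs"
    unfolding Pairs_def using card_SigmaI[OF finV finB] by simp
  have NE: "{F. F face_of P \<and> F \<noteq> {}} \<subseteq> snd ` Pairs"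
  proof
    fix F assume "F \<in> {F. F face_of P \<and> F \<noteq> {}}"
    then have F: "F face_of P" "F \<noteq> {}" by auto
    obtain v where s: "is_sink F Ori v" using sink_exists[OF assms(1) F assms(3,4)] by blast
    then have "v \<in> poly_vertices P" using F(1) extreme_point_of_face
      unfolding is_sink_def poly_vertices_def by blast
    then show "F \<in> snd ` Pairs" unfolding Pairs_def using F s by force
  qed
  have c1: "card {F. F face_of P \<and> F \<noteq> {}} \<le> card Pairs"
    using card_mono[OF finite_imageI[OF finPairs] NE] card_image_le[OF finPairs, of snd] by linarith
  have finI: "finite {F. F face_of P \<and> aff_dim F = int i}" for i
    by (rule finite_subset[OF _ finFaces]) blast
  have fsum: "(\<Sum>i\<le>d. f_num P (int i)) = card (\<Union>i\<le>d. {F. F face_of P \<and> aff_dim F = int i})"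
    unfolding f_num_def
    by (rule card_UN_disjoint[symmetric]) (use finI in auto)
  have sub: "(\<Union>i\<le>d. {F. F face_of P \<and> aff_dim F = int i}) \<subseteq> {F. F face_of P \<and> F \<noteq> {}}"
    by auto
  have finNE: "finite {F. F face_of P \<and> F \<noteq> {}}"
    by (rule finite_subset[OF _ finFaces]) blast
  have "(\<Sum>i\<le>d. f_num P (int i)) \<le> card {F. F face_of P \<and> F \<noteq> {}}"
    unfolding fsum using card_mono[OF finNE sub] .
  then show ?thesis using ineq1 sumP c1 by linarith
qed

end
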